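(* Let $n\in\mathbb{N}$, let $S\subset B_n$ be a nondegenerate simplex with vertices in $B_n$, and let $P:C(B_n)\to\Pi_1(\mathbb{R}^n)$ be the corresponding interpolation projector. If $P$ is minimal, i.e. $\|P\|_{B_n}=\theta_n(B_n)$, then $$\operatorname{vol}(S)\ \ge\ \frac{\varkappa_n}{\chi_n(\sqrt{n+1})}=\frac{\pi^{n/2}}{\Gamma\left(\frac n2+1\right)\chi_n(\sqrt{n+1})}.$$
   Context: $B_n=\{x\in\mathbb{R}^n:\|x\|\le1\}$ (Euclidean norm), $\varkappa_n=\operatorname{vol}(B_n)$. $C(B_n)$ is the space of continuous real functions on $B_n$ with the max norm; $\Pi_1(\mathbb{R}^n)$ is the set of polynomials in $n$ variables of degree at most $1$. For a nondegenerate simplex $S\subset B_n$ with vertices $x^{(1)},\dots,x^{(n+1)}$, the corresponding interpolation projector $P$ is defined by $Pf(x^{(j)})=f(x^{(j)})$, $j=1,\dots,n+1$, and $\|P\|_{B_n}$ is its operator norm on $C(B_n)$. $\theta_n(B_n)$ is the minimal value of $\|P\|_{B_n}$ over all nondegenerate simplices with vertices in $B_n$. $\chi_n(t)=\frac{1}{2^n n!}\frac{d^n}{dt^n}[(t^2-1)^n]$ is the Legendre polynomial of degree $n$. *)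

theory Defs
  imports "HOL-Analysis.Analysis" "HOL-Computational_Algebra.Polynomial"
begin

definition legendre :: "nat \<Rightarrow> real \<Rightarrow> real" where
  "legendre n t = poly ((pderiv ^^ n) ([:-1, 0, 1:] ^ n)) t / (2 ^ n * fact n)"

definition admissible_simplex :: "(nat \<Rightarrow> real ^ 'n) \<Rightarrow> bool" where
  "admissible_simplex x \<longleftrightarrow>
     inj_on x {..CARD('n)} \<and> \<not> affine_dependent (x ` {..CARD('n)}) \<and>
     (\<forall>j\<le>CARD('n). x j \<in> cball 0 1)"

definition interp_proj :: "(nat \<Rightarrow> real ^ 'n) \<Rightarrow> (real ^ 'n \<Rightarrow> real) \<Rightarrow> real ^ 'n \<Rightarrow> real" where
  "interp_proj x f = (THE p. (\<exists>a b. p = (\<lambda>y. a \<bullet> y + b)) \<and>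
                              (\<forall>j\<le>CARD('n). p (x j) = f (x j)))"

definition proj_norm :: "(nat \<Rightarrow> real ^ 'n) \<Rightarrow> real" where
  "proj_norm x = (SUP f \<in> {f. continuous_on (cball 0 1) f \<and> (\<forall>y\<in>cball 0 1. \<bar>f y\<bar> \<le> 1)}.
                    SUP y \<in> cball (0 :: real ^ 'n) 1. \<bar>interp_proj x f y\<bar>)"

definition theta :: "'n::finite itself \<Rightarrow> real" where
  "theta _ = (INF x \<in> {x :: nat \<Rightarrow> real ^ 'n. admissible_simplex x}. proj_norm x)"

end

theory Submission
  imports Defs
begin

lemma higher_pderiv_Suc: "(pderiv ^^ Suc k) p = (pderiv ^^ k) (pderiv p)"
  by (simp add: funpow_Suc_right del: funpow.simps)

lemma pderiv_sum': "pderiv (sum f A) = (\<Sum>x\<in>A. pderiv (f x))"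
  by (induct A rule: infinite_finite_induct) (simp_all add: pderiv_add)

lemma pderiv_leibniz:
  fixes p q :: "real poly"
  shows "(pderiv ^^ m) (p * q) =
     (\<Sum>k\<le>m. smult (of_nat (m choose k)) ((pderiv ^^ k) p * (pderiv ^^ (m - k)) q))"
proof (induction m)
  case 0
  then show ?case by simp
next
  case (Suc m)
  define D where "D = (\<lambda>k r. (pderiv ^^ k) (r::real poly))"
  have DS: "pderiv (D k r) = D (Suc k) r" for k r by (simp add: D_def)
  have "(pderiv ^^ Suc m) (p * q) = pderiv ((pderiv ^^ m) (p * q))" by simp
  also have "\<dots> = (\<Sum>k\<le>m. smult (of_nat (m choose k)) (D (Suc k) p * D (m - k) q))
        + (\<Sum>k\<le>m. smult (of_nat (m choose k)) (D k p * D (Suc (m - k)) q))"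
    unfolding Suc.IH pderiv_sum' pderiv_smult pderiv_mult
    by (simp add: D_def smult_add_right sum.distrib algebra_simps)
  also have "(\<Sum>k\<le>m. smult (of_nat (m choose k)) (D k p * D (Suc (m - k)) q))
      = (\<Sum>k\<le>Suc m. smult (of_nat (m choose k)) (D k p * D (Suc m - k) q))"
    by (simp add: Suc_diff_le)
  also have "\<dots> = D 0 p * D (Suc m) q + (\<Sum>k\<le>m. smult (of_nat (m choose Suc k)) (D (Suc k) p * D (m - k) q))"
    by (subst sum.atMost_Suc_shift) simp
  also have "(\<Sum>k\<le>Suc m. smult (of_nat (Suc m choose k)) ((pderiv ^^ k) p * (pderiv ^^ (Suc m - k)) q))
      = D 0 p * D (Suc m) q + (\<Sum>k\<le>m. smult (of_nat (m choose k)) (D (Suc k) p * D (m - k) q))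
         + (\<Sum>k\<le>m. smult (of_nat (m choose Suc k)) (D (Suc k) p * D (m - k) q))"
    by (subst sum.atMost_Suc_shift) (simp add: D_def smult_add_left sum.distrib)
  ultimately show ?case by (simp add: algebra_simps)
qed

lemma higher_pderiv_lin_power:
  fixes a :: real
  assumes "k \<le> n"
  shows "(pderiv ^^ k) ([:a, 1:] ^ n) = smult (fact n / fact (n - k)) ([:a, 1:] ^ (n - k))"
  using assms
proof (induction k)
  case 0
  then show ?case by simp
next
  case (Suc k)
  then have IH: "(pderiv ^^ k) ([:a, 1:] ^ n) = smult (fact n / fact (n - k)) ([:a, 1:] ^ (n - k))" by simp
  obtain j where j: "n - k = Suc j" using Suc.prems by (metis Suc_diff_Suc Suc_le_eq)
  have "(pderiv ^^ Suc k) ([:a, 1:] ^ n) = pderiv ((pderiv ^^ k) ([:a, 1:] ^ n))" by simp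
  also have "\<dots> = smult (fact n / fact (n - k)) (smult (of_nat (Suc j)) ([:a,1:] ^ j))"
    unfolding IH pderiv_smult j pderiv_power_Suc by (simp add: pderiv_pCons)
  also have "n - Suc k = j" using j by simp
  moreover have "fact n / fact (n - k) * real (Suc j) = (fact n / fact j :: real)"
    using j by (simp add: fact_Suc field_simps del: of_nat_Suc)
  ultimately show ?case by simp
qed

definition Pl :: "nat \<Rightarrow> real \<Rightarrow> real \<Rightarrow> real" where
  "Pl n u v = (\<Sum>k\<le>n. real (n choose k) ^ 2 * u ^ (n - k) * v ^ k)"

lemma legendre_Pl: "legendre n t = Pl n ((t - 1) / 2) ((t + 1) / 2)"
proof -
  have sq: "[:-1, 0, 1:] = [:-1, 1:] * [:1, 1::real:]" by simp
  have "[:-1, 0, 1:] ^ n = [:-1, 1:] ^ n * [:1, 1::real:] ^ n"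
    unfolding sq power_mult_distrib ..
  hence "poly ((pderiv ^^ n) ([:-1, 0, 1:] ^ n)) t =
     (\<Sum>k\<le>n. real (n choose k) * ((fact n / fact (n - k)) * (t - 1) ^ (n - k)) * ((fact n / fact (n - (n - k))) * (t + 1) ^ (n - (n - k))))"
    by (simp add: pderiv_leibniz poly_sum higher_pderiv_lin_power mult.assoc)
       (intro sum.cong refl, simp add: algebra_simps)
  also have "\<dots> = (\<Sum>k\<le>n. real (n choose k) * ((fact n / fact (n - k)) * (t - 1) ^ (n - k)) * ((fact n / fact k) * (t + 1) ^ k))"
    by (intro sum.cong refl) simp
  also have "\<dots> = (\<Sum>k\<le>n. 2 ^ n * fact n * (real (n choose k) ^ 2 * ((t - 1) / 2) ^ (n - k) * ((t + 1) / 2) ^ k))"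
  proof (intro sum.cong refl)
    fix k assume k: "k \<in> {..n}"
    have b: "real (n choose k) = fact n / (fact k * fact (n - k))"
      using k by (simp add: binomial_fact)
    have p: "(2::real) ^ n = 2 ^ (n - k) * 2 ^ k" using k by (simp flip: power_add)
    show "real (n choose k) * ((fact n / fact (n - k)) * (t - 1) ^ (n - k)) * ((fact n / fact k) * (t + 1) ^ k) =
      2 ^ n * fact n * (real (n choose k) ^ 2 * ((t - 1) / 2) ^ (n - k) * ((t + 1) / 2) ^ k)"
      unfolding p power2_eq_square power_divide by (simp add: b field_simps)
  qed
  also have "\<dots> = 2 ^ n * fact n * Pl n ((t - 1) / 2) ((t + 1) / 2)"
    unfolding Pl_def by (simp add: sum_distrib_left)
  finally show ?thesis unfolding legendre_def by simp
qed

lemma aux_frac: "(d::real) \<noteq> 0 \<Longrightarrow> s * c = b * d \<Longrightarrow> s * (c ^ 2 * w / d) = c * b * w"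
proof -
  assume d: "d \<noteq> 0" and e: "s * c = b * d"
  have "s * (c ^ 2 * w / d) = c * w * (s * c) / d" by (simp add: power2_eq_square)
  also have "\<dots> = c * b * w" using d e by simp
  finally show ?thesis .
qed

lemma Pl_Suc:
  "real (Suc n) * ((\<Sum>k\<le>n. real (n choose k) ^ 2 * u ^ (n - k) * v ^ (k + 1) / real (k + 1))
     + (\<Sum>k\<le>n. real (n choose k) ^ 2 * u ^ (n - k + 1) * v ^ k / real (n - k + 1)))
   = Pl (Suc n) u v"
proof -
  have A1: "real (Suc n) * (\<Sum>k\<le>n. real (n choose k) ^ 2 * u ^ (n - k) * v ^ (k + 1) / real (k + 1))
      = (\<Sum>k\<le>n. real (n choose k) * real (Suc n choose Suc k) * u ^ (n - k) * v ^ (k + 1))"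
    unfolding sum_distrib_left
  proof (intro sum.cong refl)
    fix k assume "k \<in> {..n}"
    have "real (Suc n) * real (n choose k) = real (Suc n choose Suc k) * real (Suc k)"
      by (metis Suc_times_binomial_eq of_nat_mult)
    from aux_frac[OF _ this, of "u ^ (n - k) * v ^ (k + 1)"]
    show "real (Suc n) * (real (n choose k) ^ 2 * u ^ (n - k) * v ^ (k + 1) / real (k + 1)) =
        real (n choose k) * real (Suc n choose Suc k) * u ^ (n - k) * v ^ (k + 1)"
      by (simp add: mult.assoc del: of_nat_Suc binomial_Suc_Suc)
  qed
  have A2: "real (Suc n) * (\<Sum>k\<le>n. real (n choose k) ^ 2 * u ^ (n - k + 1) * v ^ k / real (n - k + 1))
      = (\<Sum>k\<le>n. real (n choose k) * real (Suc n choose k) * u ^ (Suc n - k) * v ^ k)"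
    unfolding sum_distrib_left
  proof (intro sum.cong refl)
    fix k assume k: "k \<in> {..n}"
    have "(Suc n - k) * (Suc n choose k) = Suc n * (n choose k)"
      using binomial_absorb_comp[of "Suc n" k] by simp
    hence "real (Suc n) * real (n choose k) = real (Suc n choose k) * real (n - k + 1)"
      using k by (metis Suc_diff_le Suc_eq_plus1 atMost_iff mult.commute of_nat_mult)
    moreover have "n - k + 1 = Suc n - k" using k by simp
    ultimately show "real (Suc n) * (real (n choose k) ^ 2 * u ^ (n - k + 1) * v ^ k / real (n - k + 1)) =
        real (n choose k) * real (Suc n choose k) * u ^ (Suc n - k) * v ^ k"
      using aux_frac[of "real (n - k + 1)" "real (Suc n)" "real (n choose k)" "real (Suc n choose k)" "u ^ (Suc n - k) * v ^ k"]
      by (simp add: mult.assoc del: of_nat_Suc)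
  qed
  have split: "real (Suc n choose j) ^ 2 = real (Suc n choose j) * real (n choose j)
      + (if j = 0 then 0 else real (Suc n choose j) * real (n choose (j - 1)))" for j
    by (cases j) (simp_all add: power2_eq_square algebra_simps)
  have "Pl (Suc n) u v = (\<Sum>j\<le>Suc n. real (Suc n choose j) * real (n choose j) * u ^ (Suc n - j) * v ^ j)
     + (\<Sum>j\<le>Suc n. (if j = 0 then 0 else real (Suc n choose j) * real (n choose (j - 1))) * u ^ (Suc n - j) * v ^ j)"
    unfolding Pl_def split by (simp add: algebra_simps sum.distrib)
  also have "(\<Sum>j\<le>Suc n. real (Suc n choose j) * real (n choose j) * u ^ (Suc n - j) * v ^ j)
      = (\<Sum>k\<le>n. real (n choose k) * real (Suc n choose k) * u ^ (Suc n - k) * v ^ k)"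
    by (simp add: mult.commute)
  also have "(\<Sum>j\<le>Suc n. (if j = 0 then 0 else real (Suc n choose j) * real (n choose (j - 1))) * u ^ (Suc n - j) * v ^ j)
      = (\<Sum>k\<le>n. real (n choose k) * real (Suc n choose Suc k) * u ^ (n - k) * v ^ (k + 1))"
    by (subst sum.atMost_Suc_shift) (simp add: mult.commute)
  finally show ?thesis using A1 A2 by (simp add: distrib_left)
qed

definition Pv :: "nat \<Rightarrow> real \<Rightarrow> real \<Rightarrow> real" where
  "Pv n c t = (if \<bar>c\<bar> \<le> t then Pl n ((t - c) / 2) ((t + c) / 2) / fact n else 0)"

lemma Pl_nonneg: "u \<ge> 0 \<Longrightarrow> v \<ge> 0 \<Longrightarrow> Pl n u v \<ge> 0"
  unfolding Pl_def by (intro sum_nonneg) auto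

lemma Pv_nonneg: "Pv n c t \<ge> 0"
  unfolding Pv_def by (auto intro!: divide_nonneg_pos Pl_nonneg)

lemma F1_deriv:
  "((\<lambda>y. -(\<Sum>k\<le>n. real (n choose k) ^ 2 * u ^ (n - k) * (v - y) ^ (k + 1) / real (k + 1)) / fact n)
     has_real_derivative (Pl n u (v - y) / fact n)) (at y)"
  unfolding Pl_def
  by (rule derivative_eq_intros refl | simp)+ 
     (simp add: sum_negf algebra_simps del: of_nat_Suc)

lemma F2_deriv:
  "((\<lambda>y. (\<Sum>k\<le>n. real (n choose k) ^ 2 * (u + y) ^ (n - k + 1) * v ^ k / real (n - k + 1)) / fact n)
     has_real_derivative (Pl n (u + y) v / fact n)) (at y)"
  unfolding Pl_def
  by (rule derivative_eq_intros refl | simp)+ 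
     (simp add: algebra_simps del: of_nat_Suc)

lemma Pl_cont: "continuous_on A (\<lambda>y. Pl n (f y) (g y))" if "continuous_on A f" "continuous_on A g"
  unfolding Pl_def by (intro continuous_intros that)

lemma integral_step:
  "(\<integral>\<^sup>+y. ennreal (Pv n (c - y) (t - \<bar>y\<bar>)) \<partial>lborel) = ennreal (Pv (Suc n) c t)"
proof (cases "\<bar>c\<bar> \<le> t")
  case False
  have "Pv n (c - y) (t - \<bar>y\<bar>) = 0" for y
    using False unfolding Pv_def by auto
  then show ?thesis using False by (simp add: Pv_def)
next
  case True
  define u where "u = (t - c) / 2"
  define v where "v = (t + c) / 2"
  have u0: "u \<ge> 0" and v0: "v \<ge> 0" using True by (auto simp: u_def v_def)
  define g1 where "g1 = (\<lambda>y. Pl n u (v - y) / fact n)"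
  define g2 where "g2 = (\<lambda>y. Pl n (u + y) v / fact n)"
  define F1 where "F1 = (\<lambda>y. -(\<Sum>k\<le>n. real (n choose k) ^ 2 * u ^ (n - k) * (v - y) ^ (k + 1) / real (k + 1)) / fact n)"
  define F2 where "F2 = (\<lambda>y. (\<Sum>k\<le>n. real (n choose k) ^ 2 * (u + y) ^ (n - k + 1) * v ^ k / real (n - k + 1)) / fact n)"
  have g1m[measurable]: "g1 \<in> borel_measurable borel" unfolding g1_def
    by (intro borel_measurable_continuous_onI continuous_intros Pl_cont) auto
  have g2m[measurable]: "g2 \<in> borel_measurable borel" unfolding g2_def
    by (intro borel_measurable_continuous_onI continuous_intros Pl_cont) auto
  have pw: "ennreal (Pv n (c - y) (t - \<bar>y\<bar>)) =
      ennreal (g2 y) * indicator {-u..0} y + ennreal (g1 y) * indicator {0..v} y" if "y \<noteq> 0" for y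
  proof (cases "y > 0")
    case True
    have A: "((t - \<bar>y\<bar>) - (c - y)) / 2 = u" "((t - \<bar>y\<bar>) + (c - y)) / 2 = v - y"
      using True by (auto simp: u_def v_def)
    have B: "(\<bar>c - y\<bar> \<le> t - \<bar>y\<bar>) = (y \<le> v)" using True \<open>\<bar>c\<bar> \<le> t\<close> by (auto simp: u_def v_def abs_le_iff)
    show ?thesis using True unfolding Pv_def g1_def A B by (auto simp: indicator_def)
  next
    case False
    hence y: "y < 0" using that by simp
    have A: "((t - \<bar>y\<bar>) - (c - y)) / 2 = u + y" "((t - \<bar>y\<bar>) + (c - y)) / 2 = v"
      using y by (auto simp: u_def v_def)
    have B: "(\<bar>c - y\<bar> \<le> t - \<bar>y\<bar>) = (-u \<le> y)" using y True by (auto simp: u_def v_def abs_le_iff field_simps)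
    show ?thesis using y unfolding Pv_def g2_def A B by (auto simp: indicator_def)
  qed
  have "(\<integral>\<^sup>+y. ennreal (Pv n (c - y) (t - \<bar>y\<bar>)) \<partial>lborel) =
      (\<integral>\<^sup>+y. ennreal (g2 y) * indicator {-u..0} y + ennreal (g1 y) * indicator {0..v} y \<partial>lborel)"
    using pw AE_lborel_singleton[of 0] by (intro nn_integral_cong_AE) (auto elim!: eventually_mono)
  also have "\<dots> = (\<integral>\<^sup>+y\<in>{-u..0}. ennreal (g2 y) \<partial>lborel) + (\<integral>\<^sup>+y\<in>{0..v}. ennreal (g1 y) \<partial>lborel)"
    by (intro nn_integral_add) auto
  also have "(\<integral>\<^sup>+y\<in>{-u..0}. ennreal (g2 y) \<partial>lborel) = ennreal (F2 0 - F2 (-u))"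
  proof (rule nn_integral_FTC_Icc[OF g2m])
    show "(F2 has_real_derivative g2 y) (at y)" for y unfolding F2_def g2_def by (rule F2_deriv)
    show "y \<in> {-u..0} \<Longrightarrow> 0 \<le> g2 y" for y using v0 unfolding g2_def
      by (auto intro!: divide_nonneg_pos Pl_nonneg)
  qed (use u0 in auto)
  also have "(\<integral>\<^sup>+y\<in>{0..v}. ennreal (g1 y) \<partial>lborel) = ennreal (F1 v - F1 0)"
  proof (rule nn_integral_FTC_Icc[OF g1m])
    show "(F1 has_real_derivative g1 y) (at y)" for y unfolding F1_def g1_def by (rule F1_deriv)
    show "y \<in> {0..v} \<Longrightarrow> 0 \<le> g1 y" for y using u0 unfolding g1_def
      by (auto intro!: divide_nonneg_pos Pl_nonneg)
  qed (use v0 in auto)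
  also have "F2 0 - F2 (-u) = (\<Sum>k\<le>n. real (n choose k) ^ 2 * u ^ (n - k + 1) * v ^ k / real (n - k + 1)) / fact n"
    by (simp add: F2_def)
  also have "F1 v - F1 0 = (\<Sum>k\<le>n. real (n choose k) ^ 2 * u ^ (n - k) * v ^ (k + 1) / real (k + 1)) / fact n"
    by (simp add: F1_def)
  also have "ennreal ((\<Sum>k\<le>n. real (n choose k) ^ 2 * u ^ (n - k + 1) * v ^ k / real (n - k + 1)) / fact n)
     + ennreal ((\<Sum>k\<le>n. real (n choose k) ^ 2 * u ^ (n - k) * v ^ (k + 1) / real (k + 1)) / fact n)
     = ennreal (Pl (Suc n) u v / fact (Suc n))"
  proof -
    let ?A1 = "(\<Sum>k\<le>n. real (n choose k) ^ 2 * u ^ (n - k) * v ^ (k + 1) / real (k + 1))"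
    let ?A2 = "(\<Sum>k\<le>n. real (n choose k) ^ 2 * u ^ (n - k + 1) * v ^ k / real (n - k + 1))"
    have "?A1 \<ge> 0" "?A2 \<ge> 0" using u0 v0 by (auto intro!: sum_nonneg)
    hence "ennreal (?A2 / fact n) + ennreal (?A1 / fact n) = ennreal ((?A1 + ?A2) / fact n)"
      by (simp add: ennreal_plus[symmetric] add_divide_distrib add.commute del: ennreal_plus)
    also have "(?A1 + ?A2) / fact n = Pl (Suc n) u v / fact (Suc n)"
      using Pl_Suc[of n u v] by (simp add: field_simps del: of_nat_Suc)
    finally show ?thesis .
  qed
  also have "Pl (Suc n) u v / fact (Suc n) = Pv (Suc n) c t"
    using True by (simp add: Pv_def u_def v_def)
  finally show ?thesis .
qed

definition Kset :: "'a set \<Rightarrow> real \<Rightarrow> real \<Rightarrow> ('a \<Rightarrow> real) set" where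
  "Kset A c t = {f. \<bar>c - sum f A\<bar> + (\<Sum>i\<in>A. \<bar>f i\<bar>) \<le> t}"

lemma Kset_step:
  assumes "b \<notin> A" "finite A"
  shows "x(b := y) \<in> Kset (insert b A) c t \<longleftrightarrow> x \<in> Kset A (c - y) (t - \<bar>y\<bar>)"
proof -
  have "sum (x(b := y)) A = sum x A" "(\<Sum>i\<in>A. \<bar>(x(b := y)) i\<bar>) = (\<Sum>i\<in>A. \<bar>x i\<bar>)"
    using assms by (auto intro!: sum.cong)
  then show ?thesis using assms unfolding Kset_def by (auto simp: algebra_simps)
qed

lemma emeasure_Kset:
  assumes "finite (A :: 'a set)"
  shows "emeasure (Pi\<^sub>M A (\<lambda>_. lborel)) (Kset A c t \<inter> space (Pi\<^sub>M A (\<lambda>_. lborel)))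
           = ennreal (Pv (card A) c t)"
  using assms
proof (induction arbitrary: c t rule: finite_induct)
  case empty
  show ?case
    by (simp add: PiM_empty Kset_def Pv_def Pl_def emeasure_count_space indicator_def)
next
  case (insert b A c t)
  let ?M = "\<lambda>A. (Pi\<^sub>M A (\<lambda>_. lborel :: real measure))"
  {
    fix A :: "'a set" and c t :: real assume "finite A"
    have "Kset A c t \<inter> space (?M A) =
            (\<lambda>x. \<bar>c - sum x A\<bar> + (\<Sum>i\<in>A. \<bar>x i\<bar>)) -` {..t} \<inter> space (?M A)"
      by (auto simp: Kset_def)
    also have "\<dots> \<in> sets (?M A)"
      using \<open>finite A\<close> by measurable
    finally have "Kset A c t \<inter> space (?M A) \<in> sets (?M A)" .
  } note meas [measurable] = this
  interpret product_sigma_finite "\<lambda>_. lborel"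
    by standard
  have "emeasure (?M (insert b A)) (Kset (insert b A) c t \<inter> space (?M (insert b A))) =
        nn_integral (?M (insert b A))
          (\<lambda>x. indicator (Kset (insert b A) c t \<inter> space (?M (insert b A))) x)"
    using insert.hyps by (subst nn_integral_indicator) auto
  also have "\<dots> = (\<integral>\<^sup>+ y. \<integral>\<^sup>+ x. indicator (Kset (insert b A) c t \<inter> space (?M (insert b A)))
                    (x(b := y)) \<partial>?M A \<partial>lborel)"
    using insert.hyps by (intro product_nn_integral_insert_rev) auto
  also have "\<dots> = (\<integral>\<^sup>+ y. \<integral>\<^sup>+ x. indicator (Kset A (c - y) (t - \<bar>y\<bar>) \<inter> space (?M A)) x
                    \<partial>?M A \<partial>lborel)"
    using insert.hyps Kset_step[of b A]
    by (intro nn_integral_cong)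
       (auto simp: fun_eq_iff indicator_def space_PiM PiE_def extensional_def)
  also have "\<dots> = (\<integral>\<^sup>+ y. emeasure (?M A) (Kset A (c - y) (t - \<bar>y\<bar>) \<inter> space (?M A)) \<partial>lborel)"
    using \<open>finite A\<close> by (intro nn_integral_cong) (subst nn_integral_indicator, auto)
  also have "\<dots> = (\<integral>\<^sup>+ y. ennreal (Pv (card A) (c - y) (t - \<bar>y\<bar>)) \<partial>lborel)"
    using insert.IH by simp
  also have "\<dots> = ennreal (Pv (Suc (card A)) c t)"
    by (rule integral_step)
  finally show ?case using insert.hyps by simp
qed


lemma emeasure_Kset_euclidean:
  "emeasure lborel {x::'a::euclidean_space. \<bar>c - (\<Sum>b\<in>Basis. x \<bullet> b)\<bar> + (\<Sum>b\<in>Basis. \<bar>x \<bullet> b\<bar>) \<le> t}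
     = ennreal (Pv DIM('a) c t)"
proof -
  have "emeasure lborel {x::'a. \<bar>c - (\<Sum>b\<in>Basis. x \<bullet> b)\<bar> + (\<Sum>b\<in>Basis. \<bar>x \<bullet> b\<bar>) \<le> t} =
        emeasure (distr (Pi\<^sub>M Basis (\<lambda>b. lborel)) borel (\<lambda>f. \<Sum>b\<in>Basis. f b *\<^sub>R b))
          {x::'a. \<bar>c - (\<Sum>b\<in>Basis. x \<bullet> b)\<bar> + (\<Sum>b\<in>Basis. \<bar>x \<bullet> b\<bar>) \<le> t}"
    by (subst lborel_eq) simp
  also have "\<dots> = emeasure (Pi\<^sub>M Basis (\<lambda>b. lborel)) (Kset (Basis::'a set) c t \<inter> space (Pi\<^sub>M Basis (\<lambda>b. lborel)))"
  proof (subst emeasure_distr)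
    show "{x::'a. \<bar>c - (\<Sum>b\<in>Basis. x \<bullet> b)\<bar> + (\<Sum>b\<in>Basis. \<bar>x \<bullet> b\<bar>) \<le> t} \<in> sets borel"
      by measurable
    have ip: "(\<Sum>b'\<in>Basis. f b' *\<^sub>R b') \<bullet> b = f b" if "b \<in> Basis" for f :: "'a \<Rightarrow> real" and b
      using that by (simp add: inner_sum_left inner_Basis if_distrib cong: if_cong)
    have "(\<lambda>f. \<Sum>b\<in>Basis. f b *\<^sub>R b) -` {x::'a. \<bar>c - (\<Sum>b\<in>Basis. x \<bullet> b)\<bar> + (\<Sum>b\<in>Basis. \<bar>x \<bullet> b\<bar>) \<le> t} \<inter>
      space (Pi\<^sub>M Basis (\<lambda>b. lborel)) = Kset (Basis::'a set) c t \<inter> space (Pi\<^sub>M Basis (\<lambda>b. lborel))"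
      by (auto simp: Kset_def ip cong: sum.cong)
    then show "emeasure (Pi\<^sub>M Basis (\<lambda>b. lborel))
     ((\<lambda>f. \<Sum>b\<in>Basis. f b *\<^sub>R b) -` {x::'a. \<bar>c - (\<Sum>b\<in>Basis. x \<bullet> b)\<bar> + (\<Sum>b\<in>Basis. \<bar>x \<bullet> b\<bar>) \<le> t} \<inter>
      space (Pi\<^sub>M Basis (\<lambda>b. lborel))) =
    emeasure (Pi\<^sub>M Basis (\<lambda>b. lborel)) (Kset (Basis::'a set) c t \<inter> space (Pi\<^sub>M Basis (\<lambda>b. lborel)))"
      by simp
  qed (auto simp: Kset_def)
  also have "\<dots> = ennreal (Pv DIM('a) c t)"
    by (rule emeasure_Kset) auto
  finally show ?thesis .
qed

definition good :: "(nat \<Rightarrow> real ^ 'n) \<Rightarrow> (nat \<Rightarrow> real ^ 'n) \<Rightarrow> (nat \<Rightarrow> real) \<Rightarrow> bool" where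
  "good x a b \<longleftrightarrow>
     (\<forall>i\<le>CARD('n). \<forall>j\<le>CARD('n). a j \<bullet> x i + b j = (if i = j then 1 else 0)) \<and>
     (\<forall>y. (\<Sum>j\<le>CARD('n). a j \<bullet> y + b j) = 1 \<and> (\<Sum>j\<le>CARD('n). (a j \<bullet> y + b j) *\<^sub>R x j) = y)"

lemma good_affine:
  fixes x :: "nat \<Rightarrow> real ^ 'n"
  assumes "good x a b"
  shows "c \<bullet> y + d = (\<Sum>j\<le>CARD('n). (a j \<bullet> y + b j) * (c \<bullet> x j + d))"
proof -
  have s1: "(\<Sum>j\<le>CARD('n). a j \<bullet> y + b j) = 1" and s2: "(\<Sum>j\<le>CARD('n). (a j \<bullet> y + b j) *\<^sub>R x j) = y"
    using assms unfolding good_def by auto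
  have "c \<bullet> y + d = c \<bullet> (\<Sum>j\<le>CARD('n). (a j \<bullet> y + b j) *\<^sub>R x j) + (\<Sum>j\<le>CARD('n). a j \<bullet> y + b j) * d"
    using s1 s2 by simp
  also have "\<dots> = (\<Sum>j\<le>CARD('n). (a j \<bullet> y + b j) * (c \<bullet> x j)) + (\<Sum>j\<le>CARD('n). (a j \<bullet> y + b j) * d)"
    by (simp only: inner_sum_right inner_scaleR_right sum_distrib_right)
  also have "\<dots> = (\<Sum>j\<le>CARD('n). (a j \<bullet> y + b j) * (c \<bullet> x j + d))"
    by (simp only: sum.distrib[symmetric] distrib_left)
  finally show ?thesis .
qed

lemma good_delta:
  fixes x :: "nat \<Rightarrow> real ^ 'n"
  assumes "good x a b" "i \<le> CARD('n)" "j \<le> CARD('n)"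
  shows "a j \<bullet> x i + b j = (if i = j then 1 else 0)"
  using assms unfolding good_def by auto

lemma good_interp:
  fixes x :: "nat \<Rightarrow> real ^ 'n"
  assumes g: "good x a b"
  shows "interp_proj x f = (\<lambda>y. \<Sum>j\<le>CARD('n). f (x j) * (a j \<bullet> y + b j))"
  unfolding interp_proj_def
proof (rule the_equality)
  let ?p = "\<lambda>y. \<Sum>j\<le>CARD('n). f (x j) * (a j \<bullet> y + b j)"
  have "?p = (\<lambda>y. (\<Sum>j\<le>CARD('n). f (x j) *\<^sub>R a j) \<bullet> y + (\<Sum>j\<le>CARD('n). f (x j) * b j))"
    by (simp add: inner_sum_left distrib_left sum.distrib fun_eq_iff mult.assoc)
  moreover have "\<forall>i\<le>CARD('n). ?p (x i) = f (x i)"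
  proof (intro allI impI)
    fix i assume i: "i \<le> CARD('n)"
    have "?p (x i) = (\<Sum>j\<le>CARD('n). f (x j) * (if i = j then 1 else 0))"
      using good_delta[OF g i] by (intro sum.cong) auto
    also have "\<dots> = f (x i)" using i by (simp add: if_distrib cong: if_cong)
    finally show "?p (x i) = f (x i)" .
  qed
  ultimately show "(\<exists>c d. ?p = (\<lambda>y. c \<bullet> y + d)) \<and> (\<forall>j\<le>CARD('n). ?p (x j) = f (x j))"
    by blast
next
  fix p assume p: "(\<exists>c d. p = (\<lambda>y. c \<bullet> y + d)) \<and> (\<forall>j\<le>CARD('n). p (x j) = f (x j))"
  then obtain c d where pcd: "p = (\<lambda>y. c \<bullet> y + d)" by blast
  show "p = (\<lambda>y. \<Sum>j\<le>CARD('n). f (x j) * (a j \<bullet> y + b j))"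
  proof
    fix y
    have "p y = (\<Sum>j\<le>CARD('n). (a j \<bullet> y + b j) * p (x j))"
      unfolding pcd by (rule good_affine[OF g])
    also have "\<dots> = (\<Sum>j\<le>CARD('n). f (x j) * (a j \<bullet> y + b j))"
      using p by (intro sum.cong) auto
    finally show "p y = (\<Sum>j\<le>CARD('n). f (x j) * (a j \<bullet> y + b j))" .
  qed
qed

lemma good_admissible:
  fixes x :: "nat \<Rightarrow> real ^ 'n"
  assumes g: "good x a b" and ball: "\<forall>j\<le>CARD('n). x j \<in> cball 0 1"
  shows "admissible_simplex x"
proof -
  have inj: "inj_on x {..CARD('n)}"
  proof (rule inj_onI)
    fix i j assume i: "i \<in> {..CARD('n)}" and j: "j \<in> {..CARD('n)}" and e: "x i = x j"
    have "a i \<bullet> x i + b i = 1" using good_delta[OF g, of i i] i by simp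
    moreover have "a i \<bullet> x j + b i = (if j = i then 1 else 0)" using good_delta[OF g, of j i] i j by simp
    ultimately have "(if j = i then 1 else 0) = (1::real)" using e by simp
    thus "i = j" by (simp split: if_splits)
  qed
  have "\<not> affine_dependent (x ` {..CARD('n)})"
  proof
    assume ad: "affine_dependent (x ` {..CARD('n)})"
    have "finite (x ` {..CARD('n)})" by simp
    from affine_dependent_explicit_finite[OF this] ad
    obtain U where U0: "sum U (x ` {..CARD('n)}) = 0"
      and Uv: "\<exists>v\<in>x ` {..CARD('n)}. U v \<noteq> 0"
      and Us: "(\<Sum>v\<in>x ` {..CARD('n)}. U v *\<^sub>R v) = 0"
      by blast
    from Uv obtain k where k: "k \<le> CARD('n)" and Uk: "U (x k) \<noteq> 0" by blast
    have "0 = a k \<bullet> (\<Sum>v\<in>x ` {..CARD('n)}. U v *\<^sub>R v) + sum U (x ` {..CARD('n)}) * b k"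
      using U0 Us by simp
    also have "\<dots> = (\<Sum>v\<in>x ` {..CARD('n)}. U v * (a k \<bullet> v)) + (\<Sum>v\<in>x ` {..CARD('n)}. U v * b k)"
      by (simp only: inner_sum_right inner_scaleR_right sum_distrib_right)
    also have "\<dots> = (\<Sum>v\<in>x ` {..CARD('n)}. U v * (a k \<bullet> v + b k))"
      by (simp only: sum.distrib[symmetric] distrib_left)
    also have "\<dots> = (\<Sum>i\<le>CARD('n). U (x i) * (a k \<bullet> x i + b k))"
      using inj by (subst sum.reindex) auto
    also have "\<dots> = (\<Sum>i\<le>CARD('n). U (x i) * (if i = k then 1 else 0))"
      using good_delta[OF g _ k] by (intro sum.cong) auto
    also have "\<dots> = U (x k)" using k by (simp add: if_distrib cong: if_cong)
    finally show False using Uk by simp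
  qed
  then show ?thesis using inj ball unfolding admissible_simplex_def by auto
qed

definition wsum :: "(nat \<Rightarrow> real ^ 'n) \<Rightarrow> (nat \<Rightarrow> real) \<Rightarrow> real ^ 'n \<Rightarrow> real" where
  "wsum a b y = (\<Sum>j\<le>CARD('n). \<bar>a j \<bullet> y + b j\<bar>)"

lemma wsum_bound:
  fixes y :: "real ^ 'n"
  assumes "y \<in> cball 0 1"
  shows "wsum a b y \<le> (\<Sum>j\<le>CARD('n). norm (a j) + \<bar>b j\<bar>)"
  unfolding wsum_def
proof (intro sum_mono)
  fix j
  have "\<bar>a j \<bullet> y\<bar> \<le> norm (a j) * norm y" by (rule Cauchy_Schwarz_ineq2)
  also have "\<dots> \<le> norm (a j)" using assms by (simp add: mult_left_le)
  finally show "\<bar>a j \<bullet> y + b j\<bar> \<le> norm (a j) + \<bar>b j\<bar>" by linarith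
qed

definition Fset :: "('n::finite) itself \<Rightarrow> (real ^ 'n \<Rightarrow> real) set" where
  "Fset _ = {f. continuous_on (cball 0 1) f \<and> (\<forall>y\<in>cball 0 1. \<bar>f y\<bar> \<le> 1)}"

lemma interp_bound:
  fixes x :: "nat \<Rightarrow> real ^ 'n"
  assumes g: "good x a b" and ball: "\<forall>j\<le>CARD('n). x j \<in> cball 0 1"
    and f: "\<forall>y\<in>cball 0 1. \<bar>f y\<bar> \<le> 1"
  shows "\<bar>interp_proj x f y\<bar> \<le> wsum a b y"
proof -
  have "\<bar>interp_proj x f y\<bar> = \<bar>\<Sum>j\<le>CARD('n). f (x j) * (a j \<bullet> y + b j)\<bar>"
    by (simp add: good_interp[OF g])
  also have "\<dots> \<le> (\<Sum>j\<le>CARD('n). \<bar>f (x j) * (a j \<bullet> y + b j)\<bar>)" by (rule sum_abs)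
  also have "\<dots> \<le> wsum a b y" unfolding wsum_def
  proof (intro sum_mono)
    fix j assume "j \<in> {..CARD('n)}"
    hence "\<bar>f (x j)\<bar> \<le> 1" using f ball by auto
    thus "\<bar>f (x j) * (a j \<bullet> y + b j)\<bar> \<le> \<bar>a j \<bullet> y + b j\<bar>"
      by (simp add: abs_mult mult_left_le_one_le)
  qed
  finally show ?thesis .
qed

lemma proj_norm_upper0:
  fixes x :: "nat \<Rightarrow> real ^ 'n"
  assumes C: "\<And>f y. continuous_on (cball 0 1) f \<Longrightarrow> (\<forall>y\<in>cball 0 1. \<bar>f y\<bar> \<le> 1) \<Longrightarrow> y \<in> cball 0 1 \<Longrightarrow> \<bar>interp_proj x f y\<bar> \<le> C"
  shows "proj_norm x \<le> C"
  unfolding proj_norm_def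
proof (rule cSUP_least)
  have "(\<lambda>_. 0) \<in> {f. continuous_on (cball (0::real^'n) 1) f \<and> (\<forall>y\<in>cball 0 1. \<bar>f y\<bar> \<le> (1::real))}" by auto
  thus "{f. continuous_on (cball (0::real^'n) 1) f \<and> (\<forall>y\<in>cball 0 1. \<bar>f y\<bar> \<le> (1::real))} \<noteq> {}" by blast
next
  fix f assume f: "f \<in> {f. continuous_on (cball (0::real^'n) 1) f \<and> (\<forall>y\<in>cball 0 1. \<bar>f y\<bar> \<le> (1::real))}"
  show "(SUP y\<in>cball (0::real^'n) 1. \<bar>interp_proj x f y\<bar>) \<le> C"
  proof (rule cSUP_least)
    show "cball (0::real^'n) 1 \<noteq> {}" by simp
    fix y :: "real ^ 'n" assume y: "y \<in> cball 0 1"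
    show "\<bar>interp_proj x f y\<bar> \<le> C" using C f y by blast
  qed
qed

lemma proj_norm_upper:
  fixes x :: "nat \<Rightarrow> real ^ 'n"
  assumes g: "good x a b" and ball: "\<forall>j\<le>CARD('n). x j \<in> cball 0 1"
    and C: "\<forall>y\<in>cball 0 1. wsum a b y \<le> C"
  shows "proj_norm x \<le> C"
proof (rule proj_norm_upper0)
  fix f :: "real ^ 'n \<Rightarrow> real" and y assume f: "continuous_on (cball 0 1) f" "\<forall>y\<in>cball 0 1. \<bar>f y\<bar> \<le> 1" and y: "y \<in> cball (0::real^'n) 1"
  have "\<bar>interp_proj x f y\<bar> \<le> wsum a b y" by (rule interp_bound[OF g ball f(2)])
  also have "\<dots> \<le> C" using C y by blast
  finally show "\<bar>interp_proj x f y\<bar> \<le> C" .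
qed

lemma proj_norm_lower0:
  fixes x :: "nat \<Rightarrow> real ^ 'n" and f :: "real ^ 'n \<Rightarrow> real"
  assumes B: "\<And>h z. continuous_on (cball 0 1) h \<Longrightarrow> (\<forall>y\<in>cball 0 1. \<bar>h y\<bar> \<le> 1) \<Longrightarrow> z \<in> cball 0 1 \<Longrightarrow> \<bar>interp_proj x h z\<bar> \<le> B"
    and f: "continuous_on (cball 0 1) f" "\<forall>y\<in>cball 0 1. \<bar>f y\<bar> \<le> 1"
    and y: "y \<in> cball 0 1"
  shows "\<bar>interp_proj x f y\<bar> \<le> proj_norm x"
proof -
  let ?F = "{f. continuous_on (cball (0::real^'n) 1) f \<and> (\<forall>y\<in>cball 0 1. \<bar>f y\<bar> \<le> (1::real))}"
  have inner_bdd: "bdd_above ((\<lambda>y. \<bar>interp_proj x h y\<bar>) ` cball 0 1)" if "h \<in> ?F" for h :: "real ^ 'n \<Rightarrow> real"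
  proof (rule bdd_aboveI2)
    fix z :: "real ^ 'n" assume z: "z \<in> cball 0 1"
    show "\<bar>interp_proj x h z\<bar> \<le> B" using B that z by blast
  qed
  have outer_bdd: "bdd_above ((\<lambda>h. SUP y\<in>cball 0 1. \<bar>interp_proj x h y\<bar>) ` ?F)"
  proof (rule bdd_aboveI2)
    fix h :: "real ^ 'n \<Rightarrow> real" assume gF: "h \<in> ?F"
    show "(SUP y\<in>cball 0 1. \<bar>interp_proj x h y\<bar>) \<le> B"
    proof (rule cSUP_least)
      show "cball (0::real^'n) 1 \<noteq> {}" by simp
      fix z :: "real ^ 'n" assume z: "z \<in> cball 0 1"
      show "\<bar>interp_proj x h z\<bar> \<le> B" using B gF z by blast
    qed
  qed
  have fF: "f \<in> ?F" using f by blast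
  have "\<bar>interp_proj x f y\<bar> \<le> (SUP y\<in>cball 0 1. \<bar>interp_proj x f y\<bar>)"
    by (rule cSUP_upper[OF y inner_bdd[OF fF]])
  also have "\<dots> \<le> proj_norm x" unfolding proj_norm_def
    by (rule cSUP_upper[OF fF outer_bdd])
  finally show ?thesis .
qed

lemma proj_norm_lower:
  fixes x :: "nat \<Rightarrow> real ^ 'n"
  assumes g: "good x a b" and ball: "\<forall>j\<le>CARD('n). x j \<in> cball 0 1"
    and y: "y \<in> cball 0 1"
  shows "wsum a b y \<le> proj_norm x"
proof -
  define B where "B = (\<Sum>j\<le>CARD('n). norm (a j) + \<bar>b j\<bar>)"
  define s where "s = (\<lambda>j. sgn (a j \<bullet> y + b j))"
  define f where "f = (\<lambda>z::real^'n. max (-1) (min 1 (\<Sum>j\<le>CARD('n). s j * (a j \<bullet> z + b j))))"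
  have fc: "continuous_on (cball 0 1) f" unfolding f_def
    by (intro continuous_intros)
  have fb: "\<forall>z\<in>cball 0 1. \<bar>f z\<bar> \<le> 1" unfolding f_def by auto
  have fx: "f (x i) = s i" if i: "i \<le> CARD('n)" for i
  proof -
    have "(\<Sum>j\<le>CARD('n). s j * (a j \<bullet> x i + b j)) = (\<Sum>j\<le>CARD('n). s j * (if i = j then 1 else 0))"
      using good_delta[OF g i] by (intro sum.cong) auto
    also have "\<dots> = s i" using i by (simp add: if_distrib cong: if_cong)
    finally show ?thesis unfolding f_def s_def by (auto simp: sgn_if)
  qed
  have "interp_proj x f y = (\<Sum>j\<le>CARD('n). s j * (a j \<bullet> y + b j))"
    unfolding good_interp[OF g] using fx by (intro sum.cong) auto
  also have "\<dots> = wsum a b y" unfolding wsum_def s_def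
    by (intro sum.cong refl) (auto simp: sgn_if)
  finally have eq0: "interp_proj x f y = wsum a b y" .
  have "wsum a b y \<ge> 0" unfolding wsum_def by (intro sum_nonneg) simp
  hence eq: "\<bar>interp_proj x f y\<bar> = wsum a b y" using eq0 by simp
  have "\<bar>interp_proj x f y\<bar> \<le> proj_norm x"
  proof (rule proj_norm_lower0[OF _ fc fb y])
    fix h :: "real ^ 'n \<Rightarrow> real" and z
    assume h: "continuous_on (cball 0 1) h" "\<forall>y\<in>cball 0 1. \<bar>h y\<bar> \<le> 1" and z: "z \<in> cball (0::real^'n) 1"
    have "\<bar>interp_proj x h z\<bar> \<le> wsum a b z" by (rule interp_bound[OF g ball h(2)])
    also have "\<dots> \<le> B" unfolding B_def using wsum_bound[OF z] .
    finally show "\<bar>interp_proj x h z\<bar> \<le> B" .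
  qed
  thus ?thesis using eq by simp
qed

lemma DIM_vec_real [simp]: "DIM(real ^ 'n) = CARD('n)"
  by (simp add: DIM_cart)

lemma linear_inner_repr:
  fixes L :: "'a::euclidean_space \<Rightarrow> 'a"
  assumes "linear L" and c: "c \<in> Basis"
  shows "L z \<bullet> c = (\<Sum>c'\<in>Basis. (L c' \<bullet> c) *\<^sub>R c') \<bullet> z"
proof -
  have "L z = L (\<Sum>c'\<in>Basis. (z \<bullet> c') *\<^sub>R c')" by (simp add: euclidean_representation)
  also have "\<dots> = (\<Sum>c'\<in>Basis. (z \<bullet> c') *\<^sub>R L c')"
    using assms(1) by (simp add: linear_sum linear_scale)
  finally have "L z \<bullet> c = (\<Sum>c'\<in>Basis. (z \<bullet> c') * (L c' \<bullet> c))"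
    by (simp add: inner_sum_left)
  also have "\<dots> = (\<Sum>c'\<in>Basis. (L c' \<bullet> c) *\<^sub>R c') \<bullet> z"
    unfolding inner_sum_left inner_scaleR_left by (simp add: inner_commute mult.commute)
  finally show ?thesis .
qed

lemma admissible_struct:
  fixes x :: "nat \<Rightarrow> real ^ 'n"
  assumes adm: "admissible_simplex x"
  obtains e :: "real^'n \<Rightarrow> nat" and M L :: "real^'n \<Rightarrow> real^'n" and a :: "nat \<Rightarrow> real^'n" and b :: "nat \<Rightarrow> real" where
    "bij_betw e Basis {1..CARD('n)}" "linear M" "linear L"
    "\<And>z. M (L z) = z" "\<And>z. L (M z) = z"
    "\<And>\<mu>. M \<mu> = (\<Sum>c\<in>Basis. (\<mu> \<bullet> c) *\<^sub>R (x (e c) - x 0))"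
    "good x a b"
    "\<And>y. wsum a b y = \<bar>1 - (\<Sum>c\<in>Basis. L (y - x 0) \<bullet> c)\<bar> + (\<Sum>c\<in>Basis. \<bar>L (y - x 0) \<bullet> c\<bar>)"
    "convex hull (x ` {..CARD('n)}) = (\<lambda>\<mu>. x 0 + M \<mu>) ` (convex hull (insert 0 Basis))"
proof -
  let ?n = "CARD('n)"
  have "\<exists>e. bij_betw e (Basis :: (real^'n) set) {1..?n}"
    by (intro finite_same_card_bij) auto
  then obtain e :: "real^'n \<Rightarrow> nat" where e: "bij_betw e Basis {1..?n}" by blast
  have einj: "inj_on e Basis" and eimg: "e ` Basis = {1..?n}" using e by (auto simp: bij_betw_def)
  have idx: "{..?n} = insert 0 (e ` Basis)" using eimg by auto
  have e0: "0 \<notin> e ` Basis" using eimg by auto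
  have sumidx: "(\<Sum>j\<le>?n. g j) = g 0 + (\<Sum>c\<in>Basis. g (e c))" for g :: "nat \<Rightarrow> 'b::comm_monoid_add"
    unfolding idx using e0 einj by (simp add: sum.reindex)
  have cases_j: "j = 0 \<or> (\<exists>c\<in>Basis. j = e c)" if "j \<le> ?n" for j
    using that idx by auto
  define M where "M = (\<lambda>\<mu>::real^'n. \<Sum>c\<in>Basis. (\<mu> \<bullet> c) *\<^sub>R (x (e c) - x 0))"
  have linM: "linear M" unfolding M_def
    by (intro linearI) (simp_all add: inner_add_left scaleR_add_left sum.distrib scaleR_sum_right)
  have Mc: "M c = x (e c) - x 0" if c: "c \<in> Basis" for c
  proof -
    have "M c = (\<Sum>c'\<in>Basis. (if c' = c then 1 else 0) *\<^sub>R (x (e c') - x 0))"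
      unfolding M_def using c by (intro sum.cong refl) (auto simp: inner_Basis)
    also have "\<dots> = (\<Sum>c'\<in>Basis. (if c' = c then x (e c') - x 0 else 0))"
      by (intro sum.cong refl) simp
    also have "\<dots> = x (e c) - x 0" using c by simp
    finally show ?thesis .
  qed
  have injx: "inj_on x {..?n}" and indep: "\<not> affine_dependent (x ` {..?n})"
    using adm unfolding admissible_simplex_def by auto
  have injM: "inj M"
    unfolding linear_injective_0[OF linM]
  proof (intro allI impI)
    fix \<mu> :: "real^'n" assume M0: "M \<mu> = 0"
    define coef where "coef = (\<lambda>j. if j = 0 then - (\<Sum>c\<in>Basis. \<mu> \<bullet> c) else \<mu> \<bullet> inv_into Basis e j)"
    define U where "U = (\<lambda>v. coef (inv_into {..?n} x v))"
    have Ux: "U (x j) = coef j" if "j \<le> ?n" for j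
      unfolding U_def using injx that by (simp add: inv_into_f_f)
    have coefe: "coef (e c) = \<mu> \<bullet> c" if "c \<in> Basis" for c
      unfolding coef_def using that einj e0 by (auto simp: inv_into_f_f)
    have "sum U (x ` {..?n}) = (\<Sum>j\<le>?n. U (x j))"
      using injx by (simp add: sum.reindex)
    also have "\<dots> = (\<Sum>j\<le>?n. coef j)" using Ux by simp
    also have "\<dots> = 0" unfolding sumidx using coefe by (simp add: coef_def)
    finally have s1: "sum U (x ` {..?n}) = 0" .
    have "(\<Sum>v\<in>x ` {..?n}. U v *\<^sub>R v) = (\<Sum>j\<le>?n. U (x j) *\<^sub>R x j)"
      using injx by (simp add: sum.reindex)
    also have "\<dots> = (\<Sum>j\<le>?n. coef j *\<^sub>R x j)" using Ux by simp
    also have "\<dots> = - (\<Sum>c\<in>Basis. \<mu> \<bullet> c) *\<^sub>R x 0 + (\<Sum>c\<in>Basis. (\<mu> \<bullet> c) *\<^sub>R x (e c))"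
      unfolding sumidx using coefe by (simp add: coef_def)
    also have "\<dots> = M \<mu>"
      unfolding M_def by (simp add: scaleR_diff_right sum_subtractf scaleR_sum_left)
    finally have s2: "(\<Sum>v\<in>x ` {..?n}. U v *\<^sub>R v) = 0" using M0 by simp
    have "\<forall>v\<in>x ` {..?n}. U v = 0"
      using indep s1 s2 affine_dependent_explicit_finite[of "x ` {..?n}"] by auto
    hence "\<mu> \<bullet> c = 0" if "c \<in> Basis" for c
      using that coefe[OF that] Ux[of "e c"] eimg by force
    thus "\<mu> = 0" by (metis euclidean_eqI inner_zero_left)
  qed
  obtain L where linL: "linear L" and LMi: "\<And>z. L (M z) = z" and MLi: "\<And>z. M (L z) = z"
    using eucl.linear_injective_isomorphism[OF linM injM] by auto
  define ac where "ac = (\<lambda>c. \<Sum>c'\<in>Basis. (L c' \<bullet> c) *\<^sub>R c')"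
  have Lac: "L z \<bullet> c = ac c \<bullet> z" if "c \<in> Basis" for z c
    unfolding ac_def by (rule linear_inner_repr[OF linL that])
  define a where "a = (\<lambda>j. if j = 0 then - (\<Sum>c\<in>Basis. ac c) else ac (inv_into Basis e j))"
  define b where "b = (\<lambda>j. if j = 0 then 1 + (\<Sum>c\<in>Basis. ac c \<bullet> x 0) else - (ac (inv_into Basis e j) \<bullet> x 0))"
  have W0: "a 0 \<bullet> y + b 0 = 1 - (\<Sum>c\<in>Basis. L (y - x 0) \<bullet> c)" for y
    unfolding a_def b_def using Lac
    by (simp add: inner_sum_left inner_diff_right sum_subtractf)
  have WC: "a (e c) \<bullet> y + b (e c) = L (y - x 0) \<bullet> c" if c: "c \<in> Basis" for c y
  proof -
    have "e c \<noteq> 0" using c e0 by force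
    then show ?thesis unfolding a_def b_def using c einj Lac[OF c]
      by (simp add: inv_into_f_f inner_diff_right)
  qed
  have Lx0: "L (x 0 - x 0) = 0" using linL by (simp add: linear_0)
  have Lxe: "L (x (e c) - x 0) = c" if "c \<in> Basis" for c
    using Mc[OF that] LMi[of c] by simp
  have good: "good x a b"
    unfolding good_def
  proof (intro conjI allI impI)
    fix i j assume i: "i \<le> ?n" and j: "j \<le> ?n"
    show "a j \<bullet> x i + b j = (if i = j then 1 else 0)"
    proof (cases "i = 0")
      case True
      show ?thesis using cases_j[OF j]
      proof
        assume "j = 0" thus ?thesis using True W0[of "x 0"] Lx0 by simp
      next
        assume "\<exists>c\<in>Basis. j = e c"
        then obtain c where c: "c \<in> Basis" "j = e c" by blast
        thus ?thesis using True WC[OF c(1), of "x 0"] Lx0 e0 by force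
      qed
    next
      case False
      then obtain c where c: "c \<in> Basis" "i = e c" using cases_j[OF i] by blast
      show ?thesis using cases_j[OF j]
      proof
        assume j0: "j = 0"
        have "(\<Sum>c'\<in>Basis. c \<bullet> c') = 1" using c(1)
          by (simp add: inner_Basis if_distrib cong: if_cong)
        thus ?thesis using j0 c W0[of "x (e c)"] Lxe[OF c(1)] e0 by force
      next
        assume "\<exists>c\<in>Basis. j = e c"
        then obtain c' where c': "c' \<in> Basis" "j = e c'" by blast
        have "(i = j) = (c = c')" using c c' einj by (auto dest: inj_onD)
        thus ?thesis using c c' WC[OF c'(1), of "x (e c)"] Lxe[OF c(1)]
          by (simp add: inner_Basis)
      qed
    qed
  next
    fix y :: "real^'n"
    define \<mu> where "\<mu> = L (y - x 0)"
    show "(\<Sum>j\<le>?n. a j \<bullet> y + b j) = 1"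
      unfolding sumidx W0 using WC by simp
    have "(\<Sum>j\<le>?n. (a j \<bullet> y + b j) *\<^sub>R x j)
        = (1 - (\<Sum>c\<in>Basis. \<mu> \<bullet> c)) *\<^sub>R x 0 + (\<Sum>c\<in>Basis. (\<mu> \<bullet> c) *\<^sub>R x (e c))"
      unfolding sumidx W0 \<mu>_def using WC by simp
    also have "\<dots> = x 0 + M \<mu>"
      unfolding M_def by (simp add: scaleR_diff_left scaleR_diff_right sum_subtractf scaleR_sum_left)
    also have "\<dots> = y" unfolding \<mu>_def MLi by simp
    finally show "(\<Sum>j\<le>?n. (a j \<bullet> y + b j) *\<^sub>R x j) = y" .
  qed
  have ws: "wsum a b y = \<bar>1 - (\<Sum>c\<in>Basis. L (y - x 0) \<bullet> c)\<bar> + (\<Sum>c\<in>Basis. \<bar>L (y - x 0) \<bullet> c\<bar>)" for y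
    unfolding wsum_def sumidx W0 using WC by simp
  have img: "x ` {..?n} = (+) (x 0) ` (M ` insert 0 Basis)"
  proof -
    have "x ` {..?n} = insert (x 0) ((\<lambda>c. x (e c)) ` Basis)" unfolding idx by auto
    also have "\<dots> = (+) (x 0) ` (M ` insert 0 Basis)"
      using Mc linear_0[OF linM] by (auto simp: image_image intro!: image_cong)
    finally show ?thesis .
  qed
  have ch: "convex hull (x ` {..?n}) = (\<lambda>\<mu>. x 0 + M \<mu>) ` (convex hull (insert 0 Basis))"
    unfolding img convex_hull_translation convex_hull_linear_image[OF linM, symmetric]
    by (simp add: image_image)
  have Mdef: "\<And>\<mu>. M \<mu> = (\<Sum>c\<in>Basis. (\<mu> \<bullet> c) *\<^sub>R (x (e c) - x 0))" by (simp add: M_def)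
  show ?thesis
    by (rule that[OF e linM linL MLi LMi Mdef good ws ch])
qed

typedef 'a wo = "UNIV :: 'a set" morphisms Rep_wo Abs_wo by auto

instance wo :: (finite) finite
proof
  have e: "(UNIV :: 'a wo set) = Abs_wo ` UNIV" using type_definition.univ[OF type_definition_wo] .
  have "finite (Abs_wo ` (UNIV :: 'a set))" by (rule finite_imageI) simp
  then show "finite (UNIV :: 'a wo set)" by (subst e)
qed

instantiation wo :: (finite) linorder
begin
definition less_eq_wo :: "'a wo \<Rightarrow> 'a wo \<Rightarrow> bool" where
  "less_eq_wo x y \<longleftrightarrow> to_nat (Rep_wo x) \<le> to_nat (Rep_wo y)"
definition less_wo :: "'a wo \<Rightarrow> 'a wo \<Rightarrow> bool" where
  "less_wo x y \<longleftrightarrow> to_nat (Rep_wo x) < to_nat (Rep_wo y)"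
instance
proof
  fix x y z :: "'a wo"
  show "(x < y) = (x \<le> y \<and> \<not> y \<le> x)" unfolding less_eq_wo_def less_wo_def by auto
  show "x \<le> x" unfolding less_eq_wo_def by auto
  show "x \<le> y \<Longrightarrow> y \<le> z \<Longrightarrow> x \<le> z" unfolding less_eq_wo_def by auto
  show "x \<le> y \<Longrightarrow> y \<le> x \<Longrightarrow> x = y" unfolding less_eq_wo_def
    by (metis Rep_wo_inject le_antisym to_nat_split)
  show "x \<le> y \<or> y \<le> x" unfolding less_eq_wo_def by auto
qed
end

instance wo :: (finite) wellorder
proof
  fix P :: "'a wo \<Rightarrow> bool" and a :: "'a wo"
  assume step: "\<And>x. (\<And>y. y < x \<Longrightarrow> P y) \<Longrightarrow> P x"
  show "P a"
  proof (induction a rule: measure_induct_rule[of "\<lambda>x. to_nat (Rep_wo x)"])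
    case (less x)
    show ?case by (rule step) (use less in \<open>auto simp: less_wo_def\<close>)
  qed
qed

definition Phi :: "real ^ 'n \<Rightarrow> real ^ ('n wo)" where
  "Phi x = (\<chi> i. x $ Rep_wo i)"
definition Psi :: "real ^ ('n wo) \<Rightarrow> real ^ 'n" where
  "Psi y = (\<chi> j. y $ Abs_wo j)"

lemma Psi_Phi [simp]: "Psi (Phi x) = x"
  by (simp add: Phi_def Psi_def vec_eq_iff Abs_wo_inverse)
lemma Phi_Psi [simp]: "Phi (Psi y) = y"
  by (simp add: Phi_def Psi_def vec_eq_iff Rep_wo_inverse)

lemma linear_Phi: "linear Phi"
  by (intro linearI) (simp_all add: Phi_def vec_eq_iff)
lemma linear_Psi: "linear Psi"
  by (intro linearI) (simp_all add: Psi_def vec_eq_iff)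

lemma prod_Basis_vec:
  "(\<Prod>b\<in>(Basis :: (real ^ 'n) set). f b) = (\<Prod>i\<in>UNIV. f (axis i 1))"
proof -
  have B: "(Basis :: (real ^ 'n) set) = range (\<lambda>i. axis i 1)"
    by (auto simp: Basis_vec_def)
  have "inj (\<lambda>i::'n. axis i (1::real))" by (auto intro!: injI simp: axis_eq_axis)
  then show ?thesis unfolding B by (simp add: prod.reindex)
qed

lemma Psi_preimage_box: "Psi -` box l u = box (Phi l) (Phi u)"
proof -
  have "y \<in> Psi -` box l u \<longleftrightarrow> y \<in> box (Phi l) (Phi u)" for y
  proof -
    have "y \<in> Psi -` box l u \<longleftrightarrow> (\<forall>j. l $ j < y $ Abs_wo j \<and> y $ Abs_wo j < u $ j)"
      by (simp add: mem_box_cart Psi_def)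
    also have "\<dots> \<longleftrightarrow> (\<forall>i. l $ Rep_wo i < y $ i \<and> y $ i < u $ Rep_wo i)"
      by (metis Rep_wo_inverse Abs_wo_inverse UNIV_I)
    also have "\<dots> \<longleftrightarrow> y \<in> box (Phi l) (Phi u)"
      by (simp add: mem_box_cart Phi_def)
    finally show ?thesis .
  qed
  then show ?thesis by blast
qed

lemma Psi_measurable [measurable]: "Psi \<in> borel_measurable borel"
  by (intro borel_measurable_continuous_onI linear_continuous_on)
     (simp add: linear_conv_bounded_linear[symmetric] linear_Psi)

lemma lborel_Psi: "(lborel :: (real ^ 'n) measure) = distr lborel borel Psi"
proof (rule lborel_eqI)
  fix l u :: "real ^ 'n" assume le: "\<And>b. b \<in> Basis \<Longrightarrow> l \<bullet> b \<le> u \<bullet> b"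
  have le': "l $ j \<le> u $ j" for j using le[of "axis j 1"] by (simp add: cart_eq_inner_axis[symmetric])
  have "emeasure (distr lborel borel Psi) (box l u) = emeasure lborel (box (Phi l) (Phi u))"
    by (subst emeasure_distr) (auto simp: Psi_preimage_box)
  also have "\<dots> = (\<Prod>b\<in>Basis. (Phi u - Phi l) \<bullet> b)"
    by (intro emeasure_lborel_box) (auto simp: Basis_vec_def Phi_def le' cart_eq_inner_axis[symmetric])
  also have "\<dots> = (\<Prod>i\<in>UNIV. (u - l) $ Rep_wo i)"
    unfolding prod_Basis_vec by (simp add: cart_eq_inner_axis[symmetric] Phi_def)
  also have "\<dots> = (\<Prod>j\<in>UNIV. (u - l) $ j)"
  proof -
    have "bij_betw Rep_wo (UNIV :: 'n wo set) UNIV"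
      by (metis bij_betw_def inj_on_def Rep_wo_inject type_definition.Rep_range type_definition_wo)
    from prod.reindex_bij_betw[OF this, of "\<lambda>j. (u - l) $ j"] show ?thesis by simp
  qed
  also have "\<dots> = (\<Prod>b\<in>Basis. (u - l) \<bullet> b)"
    unfolding prod_Basis_vec by (simp add: cart_eq_inner_axis[symmetric])
  finally show "emeasure (distr lborel borel Psi) (box l u) = (\<Prod>b\<in>Basis. (u - l) \<bullet> b)" .
qed simp

lemma measure_Phi:
  fixes S :: "(real ^ 'n) set"
  assumes "compact S"
  shows "measure lebesgue (Phi ` S) = measure lebesgue S"
proof -
  have cS: "compact (Phi ` S)"
    using assms linear_Phi by (intro compact_continuous_image linear_continuous_on) (simp add: linear_conv_bounded_linear[symmetric])
  have pre: "Psi -` S = Phi ` S"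
    by (auto simp: image_iff) (metis Phi_Psi)
  have "measure lebesgue (Phi ` S) = measure lborel (Phi ` S)"
    using cS by (intro measure_completion) (simp add: borel_compact)
  also have "\<dots> = measure (distr lborel borel Psi) S"
    using assms by (subst measure_distr) (auto simp: pre borel_compact)
  also have "\<dots> = measure lborel S" by (simp flip: lborel_Psi)
  also have "\<dots> = measure lebesgue S"
    using assms by (intro measure_completion[symmetric]) (simp add: borel_compact)
  finally show ?thesis .
qed

lemma linear_measure_scale:
  fixes M :: "real ^ 'n \<Rightarrow> real ^ 'n"
  assumes "linear M"
  obtains c where "c \<ge> 0" "\<And>S. compact S \<Longrightarrow> measure lebesgue (M ` S) = c * measure lebesgue S"
proof -
  define M' where "M' = Phi \<circ> M \<circ> Psi"
  have linM': "linear M'" unfolding M'_def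
    by (intro linear_compose[OF linear_Psi linear_compose[OF assms linear_Phi]])
  have "measure lebesgue (M ` S) = \<bar>det (matrix M')\<bar> * measure lebesgue S" if S: "compact S" for S
  proof -
    have cMS: "compact (M ` S)"
      using S assms by (intro compact_continuous_image linear_continuous_on) (simp add: linear_conv_bounded_linear[symmetric])
    have cPS: "compact (Phi ` S)"
      using S linear_Phi by (intro compact_continuous_image linear_continuous_on) (simp add: linear_conv_bounded_linear[symmetric])
    have img: "Phi ` (M ` S) = M' ` (Phi ` S)" unfolding M'_def by (auto simp: image_image)
    have "measure lebesgue (M ` S) = measure lebesgue (Phi ` (M ` S))"
      by (rule measure_Phi[OF cMS, symmetric])
    also have "\<dots> = \<bar>det (matrix M')\<bar> * measure lebesgue (Phi ` S)"
      unfolding img by (rule measure_linear_image[OF linM' lmeasurable_compact[OF cPS]])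
    also have "\<dots> = \<bar>det (matrix M')\<bar> * measure lebesgue S" by (simp add: measure_Phi[OF S])
    finally show ?thesis .
  qed
  then show ?thesis using that[of "\<bar>det (matrix M')\<bar>"] by auto
qed

lemma measure_lebesgue_borel:
  fixes S :: "'a::euclidean_space set"
  assumes "closed S"
  shows "measure lebesgue S = measure lborel S"
  using assms by (intro measure_completion) (simp add: borel_closed)

lemma volume_bound:
  fixes x :: "nat \<Rightarrow> real ^ 'n"
  assumes adm: "admissible_simplex x" and pn: "proj_norm x \<le> \<gamma>" and \<gamma>1: "1 \<le> \<gamma>"
  shows "measure lebesgue (cball (0::real^'n) 1)
           \<le> legendre CARD('n) \<gamma> * measure lebesgue (convex hull (x ` {..CARD('n)}))"
proof -
  let ?n = "CARD('n)"
  obtain e :: "real^'n \<Rightarrow> nat" and M L :: "real^'n \<Rightarrow> real^'n" and a :: "nat \<Rightarrow> real^'n" and b :: "nat \<Rightarrow> real"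
    where e: "bij_betw e Basis {1..?n}" and linM: "linear M" and linL: "linear L"
      and MLi: "\<And>z. M (L z) = z" and LMi: "\<And>z. L (M z) = z"
      and Mdef: "\<And>\<mu>. M \<mu> = (\<Sum>c\<in>Basis. (\<mu> \<bullet> c) *\<^sub>R (x (e c) - x 0))"
      and good: "good x a b"
      and ws: "\<And>y. wsum a b y = \<bar>1 - (\<Sum>c\<in>Basis. L (y - x 0) \<bullet> c)\<bar> + (\<Sum>c\<in>Basis. \<bar>L (y - x 0) \<bullet> c\<bar>)"
      and ch: "convex hull (x ` {..?n}) = (\<lambda>\<mu>. x 0 + M \<mu>) ` (convex hull (insert 0 Basis))"
    by (rule admissible_struct[OF adm]) blast
  have ball: "\<forall>j\<le>?n. x j \<in> cball 0 1" using adm unfolding admissible_simplex_def by auto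
  define T where "T = {\<mu>::real^'n. \<bar>1 - (\<Sum>c\<in>Basis. \<mu> \<bullet> c)\<bar> + (\<Sum>c\<in>Basis. \<bar>\<mu> \<bullet> c\<bar>) \<le> \<gamma>}"
  have clT: "closed T" unfolding T_def
    by (intro closed_Collect_le continuous_intros)
  have "T \<subseteq> cball 0 \<gamma>"
  proof
    fix \<mu> assume "\<mu> \<in> T"
    hence "(\<Sum>c\<in>Basis. \<bar>\<mu> \<bullet> c\<bar>) \<le> \<gamma>" unfolding T_def by auto
    moreover have "norm \<mu> \<le> (\<Sum>c\<in>Basis. \<bar>\<mu> \<bullet> c\<bar>)" by (rule norm_le_l1)
    ultimately show "\<mu> \<in> cball 0 \<gamma>" by simp
  qed
  hence bT: "bounded T" using bounded_cball bounded_subset by blast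
  have cT: "compact T" using clT bT by (simp add: compact_eq_bounded_closed)
  obtain cM where cM0: "cM \<ge> 0" and cMS: "\<And>S. compact S \<Longrightarrow> measure lebesgue (M ` S) = cM * measure lebesgue S"
    using linear_measure_scale[OF linM] by blast
  have cMT: "compact (M ` T)"
    using cT linM by (intro compact_continuous_image linear_continuous_on) (simp add: linear_conv_bounded_linear[symmetric])
  have volT: "measure lebesgue T = Pv ?n 1 \<gamma>"
  proof -
    have "measure lebesgue T = measure lborel T" by (rule measure_lebesgue_borel[OF clT])
    also have "\<dots> = enn2real (ennreal (Pv ?n 1 \<gamma>))"
      unfolding measure_def T_def using emeasure_Kset_euclidean[where 'a="real^'n", of 1 \<gamma>] by simp
    also have "\<dots> = Pv ?n 1 \<gamma>" using Pv_nonneg by simp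
    finally show ?thesis .
  qed
  define D where "D = convex hull (insert 0 (Basis :: (real^'n) set))"
  have cD: "compact D" unfolding D_def by (intro finite_imp_compact_convex_hull) auto
  have mD: "D \<in> lmeasurable" using cD by (rule lmeasurable_compact)
  have volD: "measure lebesgue D = 1 / fact ?n"
    using measure_lebesgue_borel[OF compact_imp_closed[OF cD]] content_std_simplex[where 'a="real^'n"]
    unfolding D_def by simp
  have affimg: "(\<lambda>\<mu>. x 0 + M \<mu>) ` S = (+) (x 0) ` (M ` S)" for S by (auto simp: image_image)
  have volS: "measure lebesgue (convex hull (x ` {..?n})) = cM / fact ?n"
    unfolding ch affimg measure_translation using cMS[OF cD] volD D_def by simp
  have mE: "(\<lambda>\<mu>. x 0 + M \<mu>) ` T \<in> lmeasurable"
    unfolding affimg by (intro measurable_translation lmeasurable_compact cMT)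
  have volE: "measure lebesgue ((\<lambda>\<mu>. x 0 + M \<mu>) ` T) = cM * Pv ?n 1 \<gamma>"
    unfolding affimg measure_translation using cMS[OF cT] volT by simp
  have sub: "cball 0 1 \<subseteq> (\<lambda>\<mu>. x 0 + M \<mu>) ` T"
  proof
    fix y :: "real^'n" assume y: "y \<in> cball 0 1"
    have "wsum a b y \<le> proj_norm x" by (rule proj_norm_lower[OF good ball y])
    hence "L (y - x 0) \<in> T" unfolding T_def using ws[of y] pn by simp
    moreover have "y = x 0 + M (L (y - x 0))" using MLi by simp
    ultimately show "y \<in> (\<lambda>\<mu>. x 0 + M \<mu>) ` T" by blast
  qed
  have "measure lebesgue (cball (0::real^'n) 1) \<le> measure lebesgue ((\<lambda>\<mu>. x 0 + M \<mu>) ` T)"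
    by (rule measure_mono_fmeasurable[OF sub fmeasurableD[OF lmeasurable_cball] mE])
  also have "\<dots> = cM * (legendre ?n \<gamma> / fact ?n)"
    unfolding volE using \<gamma>1 by (simp add: Pv_def legendre_Pl)
  also have "\<dots> = legendre ?n \<gamma> * measure lebesgue (convex hull (x ` {..?n}))"
    unfolding volS by simp
  finally show ?thesis .
qed

lemma reg_consts:
  fixes n :: real
  assumes n: "n > 0"
  defines "\<alpha> \<equiv> sqrt ((n + 1) / n)" and "g \<equiv> - 1 / sqrt n" and "\<beta> \<equiv> (1 / sqrt n - sqrt ((n + 1) / n)) / n"
  shows "\<alpha> * \<alpha> = (n + 1) / n" "g * g = 1 / n" "\<alpha> + n * \<beta> = - g"
    "2 * \<alpha> * \<beta> + n * \<beta> * \<beta> = - 1 / n" "g + \<alpha> + n * \<beta> = 0"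
proof -
  have s: "sqrt n * sqrt n = n" using n by simp
  have a: "\<alpha> * \<alpha> = (n + 1) / n" unfolding \<alpha>_def using n by simp
  show "\<alpha> * \<alpha> = (n + 1) / n" by (rule a)
  show "g * g = 1 / n" unfolding g_def using s n by (simp add: field_simps)
  have ab: "\<alpha> + n * \<beta> = 1 / sqrt n" unfolding \<alpha>_def \<beta>_def using n by (simp add: field_simps)
  show "\<alpha> + n * \<beta> = - g" using ab unfolding g_def by simp
  show "g + \<alpha> + n * \<beta> = 0" using ab unfolding g_def by simp
  have e0: "2 * \<alpha> * \<beta> + n * \<beta> * \<beta> = \<beta> * (\<alpha> + (\<alpha> + n * \<beta>))"
    by (simp add: algebra_simps)
  have e1: "2 * \<alpha> * \<beta> + n * \<beta> * \<beta> = \<beta> * (\<alpha> + 1 / sqrt n)"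
    unfolding e0 ab ..
  have bdef: "\<beta> = (1 / sqrt n - \<alpha>) / n" unfolding \<beta>_def \<alpha>_def ..
  have "\<beta> * (\<alpha> + 1 / sqrt n) = ((1 / sqrt n) * (1 / sqrt n) - \<alpha> * \<alpha>) / n"
    unfolding bdef by (simp add: algebra_simps add_divide_distrib diff_divide_distrib)
  also have "(1 / sqrt n) * (1 / sqrt n) = 1 / n" using s by (simp add: divide_simps)
  also have "(1 / n - \<alpha> * \<alpha>) / n = - 1 / n" unfolding a using n by (simp add: field_simps)
  finally show "2 * \<alpha> * \<beta> + n * \<beta> * \<beta> = - 1 / n" using e1 by simp
qed

lemma sum_delta_real:
  fixes f :: "'a::finite \<Rightarrow> real"
  shows "(\<Sum>x\<in>UNIV. f x * (c * (if k = x then 1 else 0))) = f k * c"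
proof -
  have "(\<Sum>x\<in>UNIV. f x * (c * (if k = x then 1 else 0))) = (\<Sum>x\<in>UNIV. if k = x then f k * c else 0)"
    by (intro sum.cong) auto
  also have "\<dots> = f k * c" by simp
  finally show ?thesis .
qed

lemma sum_delta_real2:
  fixes f :: "'a::finite \<Rightarrow> real"
  shows "(\<Sum>x\<in>UNIV. f x * (c * (if x = k then 1 else 0))) = f k * c"
proof -
  have "(\<Sum>x\<in>UNIV. f x * (c * (if x = k then 1 else 0))) = (\<Sum>x\<in>UNIV. if k = x then f k * c else 0)"
    by (intro sum.cong) auto
  also have "\<dots> = f k * c" by simp
  finally show ?thesis .
qed

lemma sum_delta_real':
  fixes c :: real
  shows "(\<Sum>x\<in>(UNIV::'a::finite set). c * (if x = i then 1 else 0) + d) = c + real CARD('a) * d"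
proof -
  have "(\<Sum>x\<in>(UNIV::'a set). c * (if x = i then 1 else 0)) = (\<Sum>x\<in>UNIV. (\<lambda>_. 1) x * (c * (if i = x then 1 else 0)))"
    by (intro sum.cong) auto
  also have "\<dots> = c" by (simp only: sum_delta_real)
  finally show ?thesis by (simp add: sum.distrib)
qed

lemma sum_delta_real'':
  fixes c :: real
  shows "(\<Sum>x\<in>(UNIV::'a::finite set). c * (if i = x then 1 else 0) + d) = c + real CARD('a) * d"
  using sum_delta_real'[of c i d] by (simp add: eq_commute)

lemma regular_simplex:
  obtains z :: "nat \<Rightarrow> real ^ 'n" where "admissible_simplex z" "proj_norm z \<le> sqrt (real CARD('n) + 1)"
proof -
  let ?N = "CARD('n)"
  define n where "n = real ?N"
  have n0: "n > 0" unfolding n_def by simp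
  obtain r where r: "bij_betw r {1..?N} (UNIV :: 'n set)"
    using finite_same_card_bij[of "{1..?N}" "UNIV :: 'n set"] by auto
  define \<alpha> where "\<alpha> = sqrt ((n + 1) / n)"
  define g where "g = - 1 / sqrt n"
  define \<beta> where "\<beta> = (1 / sqrt n - sqrt ((n + 1) / n)) / n"
  have aa: "\<alpha> * \<alpha> = (n + 1) / n" and gg: "g * g = 1 / n" and anb: "\<alpha> + n * \<beta> = - g"
    and ab: "2 * \<alpha> * \<beta> + n * \<beta> * \<beta> = - 1 / n" and ganb: "g + \<alpha> + n * \<beta> = 0"
    using reg_consts[OF n0] unfolding \<alpha>_def g_def \<beta>_def by auto
  define v where "v = (\<lambda>i::'n. (\<chi> k. \<alpha> * (if k = i then 1 else 0) + \<beta>) :: real ^ 'n)"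
  define v0 where "v0 = ((\<chi> k. g) :: real ^ 'n)"
  define z where "z = (\<lambda>j::nat. if j = 0 then v0 else v (r j))"
  have idx: "{..?N} = insert 0 {1..?N}" by auto
  have sumz: "(\<Sum>j\<le>?N. F (z j)) = F v0 + (\<Sum>i\<in>UNIV. F (v i))" for F :: "real ^ 'n \<Rightarrow> 'b::comm_monoid_add"
  proof -
    have "(\<Sum>j\<le>?N. F (z j)) = F (z 0) + (\<Sum>j\<in>{1..?N}. F (z j))" unfolding idx by simp
    also have "(\<Sum>j\<in>{1..?N}. F (z j)) = (\<Sum>j\<in>{1..?N}. F (v (r j)))"
      by (intro sum.cong) (auto simp: z_def)
    also have "\<dots> = (\<Sum>i\<in>UNIV. F (v i))" by (rule sum.reindex_bij_betw[OF r])
    finally show ?thesis by (simp add: z_def)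
  qed
  define S where "S = (\<lambda>y::real^'n. \<Sum>k\<in>UNIV. y $ k)"
  have Sv: "S (v i) = \<alpha> + n * \<beta>" for i
    unfolding S_def v_def n_def by (simp add: sum_delta_real')
  have Sv0: "S v0 = n * g" unfolding S_def v0_def n_def by simp
  have yv: "y \<bullet> v i = \<alpha> * y $ i + \<beta> * S y" for y i
  proof -
    have "y \<bullet> v i = (\<Sum>k\<in>UNIV. y $ k * (\<alpha> * (if k = i then 1 else 0))) + (\<Sum>k\<in>UNIV. y $ k * \<beta>)"
      unfolding inner_vec_def v_def by (simp add: distrib_left sum.distrib)
    also have "\<dots> = \<alpha> * y $ i + \<beta> * S y"
      unfolding sum_delta_real2 S_def by (simp add: sum_distrib_left mult.commute)
    finally show ?thesis .
  qed
  have yv0: "y \<bullet> v0 = g * S y" for y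
    unfolding inner_vec_def v0_def S_def by (simp add: sum_distrib_left mult.commute)
  have vv: "v i \<bullet> v i' = (if i = i' then 1 else - 1 / n)" for i i'
  proof -
    have "v i \<bullet> v i' = \<alpha> * (\<alpha> * (if i' = i then 1 else 0) + \<beta>) + \<beta> * (\<alpha> + n * \<beta>)"
      unfolding yv Sv by (simp add: v_def)
    also have "\<dots> = \<alpha> * \<alpha> * (if i' = i then 1 else 0) + (2 * \<alpha> * \<beta> + n * \<beta> * \<beta>)"
      by (simp add: algebra_simps)
    also have "\<dots> = (if i = i' then 1 else - 1 / n)"
      unfolding aa ab using n0 by (auto simp: field_simps)
    finally show ?thesis .
  qed
  have v0v: "v0 \<bullet> v i = - 1 / n" for i
  proof -
    have "v0 \<bullet> v i = \<alpha> * g + \<beta> * (n * g)" unfolding yv Sv0 by (simp add: v0_def)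
    also have "\<dots> = g * (\<alpha> + n * \<beta>)" by (simp add: algebra_simps)
    also have "\<dots> = - (g * g)" unfolding anb by simp
    finally show ?thesis using gg by simp
  qed
  have vv0: "v i \<bullet> v0 = - 1 / n" for i using v0v by (simp add: inner_commute)
  have v0v0: "v0 \<bullet> v0 = 1" unfolding yv0 Sv0 using gg n0 by (simp add: field_simps)
  have rinj: "inj_on r {1..?N}" using r by (simp add: bij_betw_def)
  have zz: "z i \<bullet> z j = (if i = j then 1 else - 1 / n)" if i: "i \<le> ?N" and j: "j \<le> ?N" for i j
  proof (cases "i = 0")
    case True
    then show ?thesis using v0v0 v0v by (cases "j = 0") (auto simp: z_def)
  next
    case False
    show ?thesis
    proof (cases "j = 0")
      case True
      then show ?thesis using False vv0 by (auto simp: z_def)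
    next
      case False': False
      have "(r i = r j) = (i = j)" using rinj i j False False' by (auto dest: inj_onD)
      then show ?thesis using False False' vv by (auto simp: z_def)
    qed
  qed
  have nz: "norm (z j) = 1" if "j \<le> ?N" for j
    using zz[OF that that] by (simp add: norm_eq_sqrt_inner)
  have sum_z: "(\<Sum>j\<le>?N. z j) = 0"
  proof -
    have "(\<Sum>j\<le>?N. z j) = v0 + (\<Sum>i\<in>UNIV. v i)" by (rule sumz)
    also have "\<dots> = 0"
    proof (rule vec_eq_iff[THEN iffD2], intro allI)
      fix k
      have "(v0 + (\<Sum>i\<in>UNIV. v i)) $ k = g + (\<Sum>i\<in>UNIV. \<alpha> * (if k = i then 1 else 0) + \<beta>)"
        by (simp add: v0_def v_def sum_component)
      also have "\<dots> = g + \<alpha> + n * \<beta>" by (simp add: n_def sum_delta_real'')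
      also have "\<dots> = 0" by (rule ganb)
      finally show "(v0 + (\<Sum>i\<in>UNIV. v i)) $ k = (0 :: real ^ 'n) $ k" by simp
    qed
    finally show ?thesis .
  qed
  have frame: "(\<Sum>j\<le>?N. (y \<bullet> z j) *\<^sub>R z j) = ((n + 1) / n) *\<^sub>R y" for y
  proof -
    have "(\<Sum>j\<le>?N. (y \<bullet> z j) *\<^sub>R z j) = (y \<bullet> v0) *\<^sub>R v0 + (\<Sum>i\<in>UNIV. (y \<bullet> v i) *\<^sub>R v i)"
      by (rule sumz)
    also have "\<dots> = ((n + 1) / n) *\<^sub>R y"
    proof (rule vec_eq_iff[THEN iffD2], intro allI)
      fix k
      have s1: "(\<Sum>i\<in>UNIV. (\<alpha> * y $ i + \<beta> * S y) * (\<alpha> * (if k = i then 1 else 0)))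
          = \<alpha> * (\<alpha> * y $ k + \<beta> * S y)"
        by (simp only: sum_delta_real[of "\<lambda>i. \<alpha> * y $ i + \<beta> * S y"]) (simp add: mult.commute)
      have s2: "(\<Sum>i\<in>UNIV. (\<alpha> * y $ i + \<beta> * S y) * \<beta>) = \<beta> * (\<alpha> * S y + n * \<beta> * S y)"
        by (simp add: S_def n_def sum.distrib sum_distrib_left sum_distrib_right algebra_simps)
      have "((y \<bullet> v0) *\<^sub>R v0 + (\<Sum>i\<in>UNIV. (y \<bullet> v i) *\<^sub>R v i)) $ k
          = g * S y * g + (\<Sum>i\<in>UNIV. (\<alpha> * y $ i + \<beta> * S y) * (\<alpha> * (if k = i then 1 else 0) + \<beta>))"
        unfolding yv yv0 by (simp add: v0_def v_def sum_component)
      also have "\<dots> = g * S y * g + \<alpha> * (\<alpha> * y $ k + \<beta> * S y) + \<beta> * (\<alpha> * S y + n * \<beta> * S y)"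
        unfolding distrib_left sum.distrib s1 s2 by simp
      also have "\<dots> = \<alpha> * \<alpha> * y $ k + S y * (g * g + (2 * \<alpha> * \<beta> + n * \<beta> * \<beta>))"
        by (simp add: algebra_simps)
      also have "\<dots> = ((n + 1) / n) * y $ k" unfolding aa gg ab by simp
      finally show "((y \<bullet> v0) *\<^sub>R v0 + (\<Sum>i\<in>UNIV. (y \<bullet> v i) *\<^sub>R v i)) $ k = (((n + 1) / n) *\<^sub>R y) $ k"
        by simp
    qed
    finally show ?thesis .
  qed
  define a where "a = (\<lambda>j. (n / (n + 1)) *\<^sub>R z j)"
  define b where "b = (\<lambda>j::nat. 1 / (n + 1))"
  have cardN: "real (card {..?N}) = n + 1" by (simp add: n_def)
  have wform: "a j \<bullet> y + b j = (n * (y \<bullet> z j) + 1) / (n + 1)" for j y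
    unfolding a_def b_def using n0 by (simp add: field_simps inner_commute)
  have sum_t: "(\<Sum>j\<le>?N. y \<bullet> z j) = 0" for y
    using sum_z by (simp add: inner_sum_right[symmetric])
  have sum_tt: "(\<Sum>j\<le>?N. (y \<bullet> z j) * (y \<bullet> z j)) = (n + 1) / n * (y \<bullet> y)" for y
  proof -
    have "(\<Sum>j\<le>?N. (y \<bullet> z j) * (y \<bullet> z j)) = y \<bullet> (\<Sum>j\<le>?N. (y \<bullet> z j) *\<^sub>R z j)"
      by (simp add: inner_sum_right)
    also have "\<dots> = (n + 1) / n * (y \<bullet> y)" unfolding frame by simp
    finally show ?thesis .
  qed
  have good: "good z a b"
    unfolding good_def
  proof (intro conjI allI impI)
    fix i j assume i: "i \<le> ?N" and j: "j \<le> ?N"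
    have "a j \<bullet> z i + b j = (n * (z i \<bullet> z j) + 1) / (n + 1)" by (rule wform)
    also have "\<dots> = (if i = j then 1 else 0)"
      unfolding zz[OF i j] using n0 by (auto simp: field_simps)
    finally show "a j \<bullet> z i + b j = (if i = j then 1 else 0)" .
  next
    fix y :: "real ^ 'n"
    have "(\<Sum>j\<le>?N. a j \<bullet> y + b j) = (\<Sum>j\<le>?N. n / (n + 1) * (y \<bullet> z j) + 1 / (n + 1))"
      unfolding wform using n0 by (intro sum.cong) (auto simp: field_simps)
    also have "\<dots> = n / (n + 1) * (\<Sum>j\<le>?N. y \<bullet> z j) + real (card {..?N}) / (n + 1)"
      by (simp add: sum.distrib sum_distrib_left)
    also have "\<dots> = 1" unfolding sum_t cardN using n0 by simp
    finally show "(\<Sum>j\<le>?N. a j \<bullet> y + b j) = 1" .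
    have "(\<Sum>j\<le>?N. (a j \<bullet> y + b j) *\<^sub>R z j)
        = (\<Sum>j\<le>?N. (n / (n + 1)) *\<^sub>R ((y \<bullet> z j) *\<^sub>R z j) + (1 / (n + 1)) *\<^sub>R z j)"
      unfolding wform using n0 by (intro sum.cong) (auto simp: field_simps scaleR_add_left[symmetric])
    also have "\<dots> = (n / (n + 1)) *\<^sub>R (\<Sum>j\<le>?N. (y \<bullet> z j) *\<^sub>R z j) + (1 / (n + 1)) *\<^sub>R (\<Sum>j\<le>?N. z j)"
      by (simp add: sum.distrib scaleR_sum_right)
    also have "\<dots> = y" unfolding frame sum_z using n0 by simp
    finally show "(\<Sum>j\<le>?N. (a j \<bullet> y + b j) *\<^sub>R z j) = y" .
  qed
  have ball: "\<forall>j\<le>?N. z j \<in> cball 0 1" using nz by simp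
  have wb: "wsum a b y \<le> sqrt (n + 1)" if y: "y \<in> cball 0 1" for y
  proof -
    have yy: "y \<bullet> y \<le> 1"
    proof -
      have "norm y \<le> 1" using y by simp
      hence "norm y * norm y \<le> 1" by (simp add: mult_le_one)
      thus ?thesis by (simp add: norm_eq_sqrt_inner)
    qed
    define w where "w = (\<lambda>j. a j \<bullet> y + b j)"
    have "(\<Sum>j\<le>?N. (w j)\<^sup>2) = (\<Sum>j\<le>?N. (n * n * ((y \<bullet> z j) * (y \<bullet> z j)) + 2 * n * (y \<bullet> z j) + 1) / ((n + 1) * (n + 1)))"
      unfolding w_def wform by (intro sum.cong refl) (simp add: power2_eq_square field_simps)
    also have "\<dots> = (n * n * (\<Sum>j\<le>?N. (y \<bullet> z j) * (y \<bullet> z j)) + 2 * n * (\<Sum>j\<le>?N. y \<bullet> z j) + real (card {..?N})) / ((n + 1) * (n + 1))"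
      by (simp add: sum_divide_distrib[symmetric] sum.distrib sum_distrib_left)
    also have "\<dots> = (1 + n * (y \<bullet> y)) / (n + 1)"
    proof -
      have e1: "n * n * ((n + 1) / n * (y \<bullet> y)) = (n + 1) * (n * (y \<bullet> y))" using n0 by (simp add: field_simps)
      have "n * n * ((n + 1) / n * (y \<bullet> y)) + 2 * n * 0 + (n + 1) = (n + 1) * (1 + n * (y \<bullet> y))"
        unfolding e1 by (simp add: algebra_simps)
      hence "(n * n * ((n + 1) / n * (y \<bullet> y)) + 2 * n * 0 + (n + 1)) / ((n + 1) * (n + 1)) = (1 + n * (y \<bullet> y)) / (n + 1)"
        using n0 by simp
      thus ?thesis unfolding sum_tt sum_t cardN .
    qed
    also have "\<dots> \<le> 1" using n0 yy by (simp add: field_simps)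
    finally have s2: "(\<Sum>j\<le>?N. (w j)\<^sup>2) \<le> 1" .
    have "(\<Sum>j\<le>?N. \<bar>w j\<bar>)\<^sup>2 \<le> (\<Sum>j\<le>?N. \<bar>w j\<bar>\<^sup>2) * real (card {..?N})"
      by (rule sum_squared_le_sum_of_squares)
    also have "\<dots> = (\<Sum>j\<le>?N. (w j)\<^sup>2) * (n + 1)" unfolding cardN by simp
    also have "\<dots> \<le> 1 * (n + 1)" using s2 n0 by (intro mult_right_mono) auto
    finally have "(\<Sum>j\<le>?N. \<bar>w j\<bar>)\<^sup>2 \<le> n + 1" by simp
    hence "(\<Sum>j\<le>?N. \<bar>w j\<bar>) \<le> sqrt (n + 1)" by (rule real_le_rsqrt)
    thus ?thesis unfolding wsum_def w_def .
  qed
  show ?thesis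
  proof (rule that)
    show "admissible_simplex z" by (rule good_admissible[OF good ball])
    show "proj_norm z \<le> sqrt (real CARD('n) + 1)"
      using proj_norm_upper[OF good ball] wb unfolding n_def by blast
  qed
qed

lemma proj_norm_nonneg:
  fixes x :: "nat \<Rightarrow> real ^ 'n"
  assumes adm: "admissible_simplex x"
  shows "proj_norm x \<ge> 0"
proof -
  obtain e :: "real^'n \<Rightarrow> nat" and M L :: "real^'n \<Rightarrow> real^'n" and a :: "nat \<Rightarrow> real^'n" and b :: "nat \<Rightarrow> real"
    where "good x a b"
    using admissible_struct[OF adm] by metis
  moreover have "\<forall>j\<le>CARD('n). x j \<in> cball 0 1" using adm unfolding admissible_simplex_def by auto
  ultimately have "wsum a b 0 \<le> proj_norm x" by (intro proj_norm_lower) auto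
  moreover have "wsum a b 0 \<ge> 0" unfolding wsum_def by (intro sum_nonneg) simp
  ultimately show ?thesis by linarith
qed

lemma ball_volume:
  "measure lebesgue (cball (0 :: real ^ 'n) 1) = unit_ball_vol (real CARD('n))"
proof -
  have "measure lebesgue (cball (0 :: real ^ 'n) 1) = measure lborel (cball (0 :: real ^ 'n) 1)"
    by (intro measure_completion) simp
  also have "\<dots> = unit_ball_vol (real CARD('n))"
    unfolding measure_def using emeasure_cball[of 1 "0 :: real ^ 'n"] by simp
  finally show ?thesis .
qed

theorem corollary3:
  fixes x :: "nat \<Rightarrow> real ^ 'n"
  assumes "admissible_simplex x"
    and "proj_norm x = theta TYPE('n)"
  shows "measure lebesgue (convex hull (x ` {..CARD('n)}))
           \<ge> measure lebesgue (cball (0 :: real ^ 'n) 1) / legendre CARD('n) (sqrt (real CARD('n) + 1))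
    \<and> measure lebesgue (cball (0 :: real ^ 'n) 1) / legendre CARD('n) (sqrt (real CARD('n) + 1))
        = pi powr (real CARD('n) / 2) / (Gamma (real CARD('n) / 2 + 1) * legendre CARD('n) (sqrt (real CARD('n) + 1)))"
proof -
  let ?n = "CARD('n)"
  let ?L = "legendre ?n (sqrt (real ?n + 1))"
  let ?V = "measure lebesgue (convex hull (x ` {..?n}))"
  let ?K = "measure lebesgue (cball (0 :: real ^ 'n) 1)"
  obtain z :: "nat \<Rightarrow> real ^ 'n" where z: "admissible_simplex z" "proj_norm z \<le> sqrt (real ?n + 1)"
    by (rule regular_simplex)
  have "theta TYPE('n) \<le> proj_norm z"
    unfolding theta_def
  proof (rule cINF_lower)
    show "bdd_below (proj_norm ` {x :: nat \<Rightarrow> real ^ 'n. admissible_simplex x})"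
      by (rule bdd_belowI2[where m = 0]) (auto intro: proj_norm_nonneg)
    show "z \<in> {x. admissible_simplex x}" using z by simp
  qed
  hence pn: "proj_norm x \<le> sqrt (real ?n + 1)" using assms(2) z(2) by simp
  have g1: "1 \<le> sqrt (real ?n + 1)" by simp
  have main: "?K \<le> ?L * ?V" by (rule volume_bound[OF assms(1) pn g1])
  have K: "?K = unit_ball_vol (real ?n)" by (rule ball_volume)
  have Kpos: "?K > 0" unfolding K by simp
  have V0: "?V \<ge> 0" by simp
  have Lpos: "?L > 0"
  proof (rule ccontr)
    assume "\<not> ?L > 0"
    hence "?L * ?V \<le> 0" using V0 by (simp add: mult_nonpos_nonneg)
    thus False using main Kpos by linarith
  qed
  have "?K / ?L \<le> ?V" using main Lpos by (simp add: divide_le_eq mult.commute)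
  moreover have "?K / ?L = pi powr (real ?n / 2) / (Gamma (real ?n / 2 + 1) * ?L)"
    unfolding K unit_ball_vol_def by simp
  ultimately show ?thesis by simp
qed

end
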